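(* The map $G$ is continuous on the metric space $(\mathcal{X},d)$.
   Context: Fix an integer $\mathsf{N}\ge 1$ and write $\llbracket a;b\rrbracket=\{a,a+1,\dots,b\}$. Let $f:\mathbb{Z}/4\mathbb{Z}\to\mathbb{Z}/4\mathbb{Z}$, $f(x)=x+1 \pmod 4$, with $f^{-1}(x)=x-1\pmod 4$ and $f^0=\mathrm{id}$. Let $\mathrm{sign}(x)=1$ if $x>0$, $0$ if $x=0$, $-1$ if $x<0$. For $k\in\llbracket -\mathsf{N};\mathsf{N}\rrbracket$ define $f_k:(\mathbb{Z}/4\mathbb{Z})^{\mathsf{N}}\to(\mathbb{Z}/4\mathbb{Z})^{\mathsf{N}}$ by $f_k(C_1,\dots,C_{\mathsf{N}})=(C_1,\dots,C_{|k|-1},f^{\mathrm{sign}(k)}(C_{|k|}),\dots,f^{\mathrm{sign}(k)}(C_{\mathsf{N}}))$ (so $f_0$ is the identity). Folding sequences are $F=(F^j)_{j\in\mathbb{N}}\in\llbracket -\mathsf{N};\mathsf{N}\rrbracket^{\mathbb{N}}$; let $i(F)=F^0$ and let $\sigma$ be the shift, $\sigma((F^j)_{j})=(F^{j+1})_{j}$. A finite sequence $(k_1,\dots,k_n)$ is identified with $(k_1,\dots,k_n,0,0,\dots)$. On $\check{\mathcal{X}}=(\mathbb{Z}/4\mathbb{Z})^{\mathsf{N}}\times\llbracket -\mathsf{N};\mathsf{N}\rrbracket^{\mathbb{N}}$ define $G((C,F))=(f_{i(F)}(C),\sigma(F))$. SAW requirement: for $C\in(\mathbb{Z}/4\mathbb{Z})^{\mathsf{N}}$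 let $p(C)=(X_0,\dots,X_{\mathsf{N}})\in(\mathbb{Z}^2)^{\mathsf{N}+1}$ with $X_0=(0,0)$ and $X_i=X_{i-1}+v(C_i)$, where $v(0)=(1,0)$, $v(1)=(0,-1)$, $v(2)=(-1,0)$, $v(3)=(0,1)$. $C$ satisfies the SAW requirement iff the points $X_0,\dots,X_{\mathsf{N}}$ are pairwise distinct. Let $\mathfrak{C}_{\mathsf{N}}$ be the set of $C\in(\mathbb{Z}/4\mathbb{Z})^{\mathsf{N}}$ for which there exist $n\ge1$ and $k_1,\dots,k_n\in\llbracket -\mathsf{N};\mathsf{N}\rrbracket$ such that $C$ is the first component of $G^n(((0,\dots,0),(k_1,\dots,k_n)))$ and, for every $i\le n$, the first component of $G^i(((0,\dots,0),(k_1,\dots,k_n)))$ satisfies the SAW requirement. Let $\mathcal{X}=\mathfrak{C}_{\mathsf{N}}\times\llbracket -\mathsf{N};\mathsf{N}\rrbracket^{\mathbb{N}}$ with metric $d((C,F),(\check C,\check F))=d_C(C,\check C)+d_F(F,\check F)$, where $d_C(C,\check C)=\sum_{k=1}^{\mathsf{N}}\delta(C_k,\check C_k)2^{\mathsf{N}-k}$ ($\delta(a,b)=0$ if $a=b$, $1$ otherwise) and $d_F(F,\check F)=\frac{9}{2\mathsf{N}}\sum_{k=0}^{\infty}\frac{|F^k-\check F^k|}{10^{k+1}}$. The paper regards $G$ as a self-map of $\mathcal{X}$. *)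

theory Defs
  imports Complex_Main
begin

text \<open>Configurations C in (Z/4Z)^N are represented as int lists of length N with entries
  in {0..3}; list index j (0-based) corresponds to coordinate C_(j+1).\<close>

definition fk :: "int \<Rightarrow> int list \<Rightarrow> int list" where
  "fk k C = map (\<lambda>j. if k \<noteq> 0 \<and> nat \<bar>k\<bar> \<le> Suc j then (C ! j + sgn k) mod 4 else C ! j)
                 [0..<length C]"

definition Gmap :: "int list \<times> (nat \<Rightarrow> int) \<Rightarrow> int list \<times> (nat \<Rightarrow> int)" where
  "Gmap x = (fk (snd x 0) (fst x), \<lambda>j. snd x (Suc j))"

definition vstep :: "int \<Rightarrow> int \<times> int" where
  "vstep c = (if c = 0 then (1, 0) else if c = 1 then (0, -1) else if c = 2 then (-1, 0) else (0, 1))"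

definition posn :: "int list \<Rightarrow> nat \<Rightarrow> int \<times> int" where
  "posn C i = ((\<Sum>j<i. fst (vstep (C ! j))), (\<Sum>j<i. snd (vstep (C ! j))))"

definition SAW :: "int list \<Rightarrow> bool" where
  "SAW C \<longleftrightarrow> distinct (map (posn C) [0..<Suc (length C)])"

definition finseq :: "int list \<Rightarrow> nat \<Rightarrow> int" where
  "finseq ks j = (if j < length ks then ks ! j else 0)"

definition reachableC :: "nat \<Rightarrow> int list set" where
  "reachableC N = {C. \<exists>ks. length ks \<ge> 1 \<and> (\<forall>k\<in>set ks. - int N \<le> k \<and> k \<le> int N) \<and>
      C = fst ((Gmap ^^ length ks) (replicate N 0, finseq ks)) \<and>
      (\<forall>i\<in>{1..length ks}. SAW (fst ((Gmap ^^ i) (replicate N 0, finseq ks))))}"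

definition Xspace :: "nat \<Rightarrow> (int list \<times> (nat \<Rightarrow> int)) set" where
  "Xspace N = {(C, F). C \<in> reachableC N \<and> (\<forall>j. - int N \<le> F j \<and> F j \<le> int N)}"

definition dC :: "nat \<Rightarrow> int list \<Rightarrow> int list \<Rightarrow> real" where
  "dC N C C' = (\<Sum>k=1..N. (if C ! (k - 1) = C' ! (k - 1) then 0 else 1) * 2 ^ (N - k))"

definition dF :: "nat \<Rightarrow> (nat \<Rightarrow> int) \<Rightarrow> (nat \<Rightarrow> int) \<Rightarrow> real" where
  "dF N F F' = 9 / (2 * real N) * (\<Sum>k. real_of_int \<bar>F k - F' k\<bar> / 10 ^ (k + 1))"

definition dX :: "nat \<Rightarrow> int list \<times> (nat \<Rightarrow> int) \<Rightarrow> int list \<times> (nat \<Rightarrow> int) \<Rightarrow> real" where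
  "dX N x y = dC N (fst x) (fst y) + dF N (snd x) (snd y)"

end

theory Submission
  imports Defs
begin

lemma fk_len[simp]: "length (fk k C) = length C"
  by (simp add: fk_def)

lemma Gpow_len: "length (fst ((Gmap ^^ n) x)) = length (fst x)"
  by (induction n) (auto simp: Gmap_def)

lemma reach_len: "C \<in> reachableC N \<Longrightarrow> length C = N"
  by (auto simp: reachableC_def Gpow_len)

lemma summ_aux:
  assumes "\<And>k. \<bar>F k - F' k\<bar> \<le> B"
  shows "summable (\<lambda>k. real_of_int \<bar>F k - F' k\<bar> / 10 ^ (k + 1))"
proof (rule summable_comparison_test)
  show "\<exists>N. \<forall>n\<ge>N. norm (real_of_int \<bar>F n - F' n\<bar> / 10 ^ (n + 1)) \<le> real_of_int B * (1/10) ^ (n+1)"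
  proof (intro exI allI impI)
    fix n :: nat
    have "real_of_int \<bar>F n - F' n\<bar> \<le> real_of_int B" using assms[of n] by linarith
    then show "norm (real_of_int \<bar>F n - F' n\<bar> / 10 ^ (n + 1)) \<le> real_of_int B * (1/10) ^ (n+1)"
      by (simp add: power_divide divide_right_mono)
  qed
  show "summable (\<lambda>n. real_of_int B * (1/10) ^ (n+1))"
    by (intro summable_mult summable_ignore_initial_segment) (simp add: summable_geometric)
qed

lemma dF_facts:
  assumes "\<And>k. \<bar>F k - F' k\<bar> \<le> B"
  shows "dF N (\<lambda>j. F (Suc j)) (\<lambda>j. F' (Suc j)) \<le> 10 * dF N F F'"
    and "9 / (2 * real N) * (real_of_int \<bar>F 0 - F' 0\<bar> / 10) \<le> dF N F F'"
proof -
  let ?f = "\<lambda>k. real_of_int \<bar>F k - F' k\<bar> / 10 ^ (k + 1)"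
  have s: "summable ?f" by (rule summ_aux[OF assms])
  have s1: "summable (\<lambda>k. ?f (Suc k))" using s by (subst summable_Suc_iff)
  have split: "suminf ?f = ?f 0 + suminf (\<lambda>k. ?f (Suc k))"
    using suminf_split_head[OF s] by simp
  have nn: "0 \<le> suminf (\<lambda>k. ?f (Suc k))" by (intro suminf_nonneg s1) simp
  have eq: "(\<lambda>k. real_of_int \<bar>F (Suc k) - F' (Suc k)\<bar> / 10 ^ (k + 1)) = (\<lambda>k. 10 * ?f (Suc k))"
    by (auto simp: field_simps)
  have sh: "(\<Sum>k. real_of_int \<bar>F (Suc k) - F' (Suc k)\<bar> / 10 ^ (k + 1)) = 10 * suminf (\<lambda>k. ?f (Suc k))"
    unfolding eq by (rule suminf_mult[OF s1])
  have c: "0 \<le> 9 / (2 * real N)" by simp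
  have f0: "0 \<le> ?f 0" by simp
  show "dF N (\<lambda>j. F (Suc j)) (\<lambda>j. F' (Suc j)) \<le> 10 * dF N F F'"
    unfolding dF_def sh split using c f0 nn
    by (simp add: algebra_simps mult_left_mono)
  show "9 / (2 * real N) * (real_of_int \<bar>F 0 - F' 0\<bar> / 10) \<le> dF N F F'"
    unfolding dF_def split using c nn mult_left_mono[of "?f 0" "?f 0 + suminf (\<lambda>k. ?f (Suc k))" "9 / (2 * real N)"]
    by simp
qed

lemma dC_nonneg: "0 \<le> dC N C C'"
  unfolding dC_def by (intro sum_nonneg) auto

lemma dF_nonneg:
  assumes "\<And>k. \<bar>F k - F' k\<bar> \<le> B"
  shows "0 \<le> dF N F F'"
  using dF_facts(2)[OF assms, of N] by (rule order_trans[rotated]) simp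

lemma dC_eq:
  assumes "dC N C C' < 1" "length C = N" "length C' = N"
  shows "C = C'"
proof (rule nth_equalityI)
  show "length C = length C'" using assms by simp
  fix i assume i: "i < length C"
  show "C ! i = C' ! i"
  proof (rule ccontr)
    assume ne: "C ! i \<noteq> C' ! i"
    let ?g = "\<lambda>k. (if C ! (k - 1) = C' ! (k - 1) then 0 else 1) * (2::real) ^ (N - k)"
    have "?g (Suc i) \<le> dC N C C'"
      unfolding dC_def by (rule member_le_sum) (use i assms in auto)
    moreover have "?g (Suc i) \<ge> 1" using ne by simp
    ultimately show False using assms(1) by simp
  qed
qed

theorem mainTheorem1:
  fixes N :: nat
  assumes "N \<ge> 1"
  shows "\<forall>x\<in>Xspace N. \<forall>\<epsilon>>0. \<exists>\<delta>>0. \<forall>y\<in>Xspace N.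
           dX N x y < \<delta> \<longrightarrow> dX N (Gmap x) (Gmap y) < \<epsilon>"
proof (intro ballI allI impI)
  fix x \<epsilon> assume x: "x \<in> Xspace N" and e: "(\<epsilon>::real) > 0"
  define \<delta> where "\<delta> = min (9 / (20 * real N)) (\<epsilon> / 10)"
  have Npos: "real N \<ge> 1" using assms by simp
  show "\<exists>\<delta>>0. \<forall>y\<in>Xspace N. dX N x y < \<delta> \<longrightarrow> dX N (Gmap x) (Gmap y) < \<epsilon>"
  proof (intro exI conjI ballI impI)
    show "\<delta> > 0" using e Npos by (simp add: \<delta>_def)
    fix y assume y: "y \<in> Xspace N" and d: "dX N x y < \<delta>"
    obtain C F where xe: "x = (C, F)" by (cases x)
    obtain C' F' where ye: "y = (C', F')" by (cases y)
    have C: "C \<in> reachableC N" "\<And>j. - int N \<le> F j \<and> F j \<le> int N" using x xe by (auto simp: Xspace_def)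
    have C': "C' \<in> reachableC N" "\<And>j. - int N \<le> F' j \<and> F' j \<le> int N" using y ye by (auto simp: Xspace_def)
    have bd: "\<bar>F k - F' k\<bar> \<le> 2 * int N" for k
    proof -
      have "- int N \<le> F k" "F k \<le> int N" "- int N \<le> F' k" "F' k \<le> int N"
        using C(2)[of k] C'(2)[of k] by auto
      then show ?thesis by linarith
    qed
    have dFn: "0 \<le> dF N F F'" by (rule dF_nonneg[OF bd])
    have dCn: "0 \<le> dC N C C'" by (rule dC_nonneg)
    have dsum: "dC N C C' + dF N F F' < \<delta>" using d xe ye by (simp add: dX_def)
    have "9 / (20 * real N) \<le> 9/20" using Npos by (simp add: field_simps)
    hence "\<delta> \<le> 9/20" unfolding \<delta>_def by linarith
    hence "dC N C C' < 1" using dsum dFn by simp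
    hence CC: "C = C'" using dC_eq reach_len C(1) C'(1) by blast
    have F0: "F 0 = F' 0"
    proof (rule ccontr)
      assume "F 0 \<noteq> F' 0"
      hence "real_of_int \<bar>F 0 - F' 0\<bar> \<ge> 1" by simp
      hence "9 / (2 * real N) * (1 / 10) \<le> 9 / (2 * real N) * (real_of_int \<bar>F 0 - F' 0\<bar> / 10)"
        using Npos by (intro mult_left_mono) auto
      also have "\<dots> \<le> dF N F F'" by (rule dF_facts(2)[OF bd])
      finally have "9 / (20 * real N) \<le> dF N F F'" by simp
      moreover have "dF N F F' < 9 / (20 * real N)" using dsum dCn unfolding \<delta>_def by simp
      ultimately show False by simp
    qed
    have "dX N (Gmap x) (Gmap y) = dF N (\<lambda>j. F (Suc j)) (\<lambda>j. F' (Suc j))"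
      using xe ye CC F0 by (simp add: dX_def Gmap_def dC_def)
    also have "\<dots> \<le> 10 * dF N F F'" by (rule dF_facts(1)[OF bd])
    also have "\<dots> < 10 * \<delta>" using dsum dCn by simp
    also have "\<dots> \<le> \<epsilon>" unfolding \<delta>_def by simp
    finally show "dX N (Gmap x) (Gmap y) < \<epsilon>" .
  qed
qed

end
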